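(* Consider a discrete memoryless wiretap channel with finite input alphabet $\mathcal{X}$, finite output alphabets $\mathcal{Y},\mathcal{Z}$, main channel $p(y|x)$ and eavesdropper channel $p(z|x)$. For $\mu\ge 0$ let $$\Phi(\mu)=\sup\ \big[\mu I(V;Y)+I(V;Y|U)-I(V;Z|U)\big],$$ the supremum being over all finite-alphabet random variables $U,V$ and input $X$ forming a Markov chain $U\to V\to X\to (Y,Z)$ (with $Y$, $Z$ generated from $X$ through $p(y|x)$, $p(z|x)$). (i) If $p(y|x)$ is more capable than $p(z|x)$, then for every $\mu\ge 0$, $$\Phi(\mu)=\max_{U\to X\to (Y,Z),\ |\mathcal{U}|\le|\mathcal{X}|}\big[\mu I(X;Y)+I(X;Y|U)-I(X;Z|U)\big],$$ i.e. the choice $V=X$ is optimal for every point of the boundary of the rate-equivocation region, and an optimal $U$ with alphabet size at most $|\mathcal{X}|$ exists. (ii) Conversely, suppose $p(y|x)$ is not more capable than $p(z|x)$ and that $f(P_x)=I(X;Y)-I(X;Z)$ attains its maximum over the simplex of input distributions at some $P_x^*$ with all entries strictly positive. Then $V=X$ is strictly suboptimal: there exists a finite-alphabet $V$ with $V\to X\to(Y,Z)$ such that $$I(V;Y)-I(V;Z)>\max_{P_x}\big[I(X;Y)-I(X;Z)\big].$$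
   Context: For an input distribution $P_x$ on $\mathcal{X}$, $I(X;Y)$ and $I(X;Z)$ denote the mutual informations when $X\sim P_x$ is sent over $p(y|x)$ and $p(z|x)$ respectively. The channel $p(y|x)$ is called more capable than $p(z|x)$ if $I(X;Y)-I(X;Z)\ge 0$ for every input distribution $P_x$. The upper right boundary of the (convex) rate-equivocation region of the wiretap channel is traced by the values $\Phi(\mu)$, $\mu\ge0$ (Csiszár–Körner characterization); in particular $\Phi(0)$ is the secrecy capacity $C_s=\sup_{V\to X\to(Y,Z)}[I(V;Y)-I(V;Z)]$. *)

theory Defs
  imports Complex_Main
begin

(* Finite pmf's are represented as nonnegative real functions on finite sets summing to 1.
   Logarithms are base 2; terms with zero probability contribute 0. *)

definition is_pmf :: "'a set \<Rightarrow> ('a \<Rightarrow> real) \<Rightarrow> bool" where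
  "is_pmf A p \<longleftrightarrow> (\<forall>a\<in>A. 0 \<le> p a) \<and> sum p A = 1"

definition channel :: "('x::finite \<Rightarrow> 'y::finite \<Rightarrow> real) \<Rightarrow> bool" where
  "channel W \<longleftrightarrow> (\<forall>x. is_pmf UNIV (W x))"

definition mi :: "'b set \<Rightarrow> 'c set \<Rightarrow> ('b \<Rightarrow> 'c \<Rightarrow> real) \<Rightarrow> real" where
  "mi B C p = (\<Sum>b\<in>B. \<Sum>c\<in>C.
      if p b c = 0 then 0
      else p b c * log 2 (p b c / ((\<Sum>c'\<in>C. p b c') * (\<Sum>b'\<in>B. p b' c))))"

definition cmi :: "'a set \<Rightarrow> 'b set \<Rightarrow> 'c set \<Rightarrow> ('a \<Rightarrow> 'b \<Rightarrow> 'c \<Rightarrow> real) \<Rightarrow> real" where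
  "cmi A B C r = (\<Sum>a\<in>A. \<Sum>b\<in>B. \<Sum>c\<in>C.
      if r a b c = 0 then 0
      else r a b c * log 2 (r a b c * (\<Sum>b'\<in>B. \<Sum>c'\<in>C. r a b' c') /
             ((\<Sum>c'\<in>C. r a b c') * (\<Sum>b'\<in>B. r a b' c))))"

(* objective  mu I(V;Y) + I(V;Y|U) - I(V;Z|U)  for a joint pmf q(u,v,x) of (U,V,X)
   on A \<times> B \<times> 'x, with Y and Z produced from X through W and Wz *)
definition obj :: "real \<Rightarrow> ('x::finite \<Rightarrow> 'y::finite \<Rightarrow> real) \<Rightarrow> ('x \<Rightarrow> 'z::finite \<Rightarrow> real)
                   \<Rightarrow> 'u set \<Rightarrow> 'v set \<Rightarrow> ('u \<Rightarrow> 'v \<Rightarrow> 'x \<Rightarrow> real) \<Rightarrow> real" where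
  "obj mu W Wz A B q =
     mu * mi B UNIV (\<lambda>v y. \<Sum>u\<in>A. \<Sum>x\<in>UNIV. q u v x * W x y)
     + cmi A B UNIV (\<lambda>u v y. \<Sum>x\<in>UNIV. q u v x * W x y)
     - cmi A B UNIV (\<lambda>u v z. \<Sum>x\<in>UNIV. q u v x * Wz x z)"

(* Phi(mu): supremum over finite-alphabet U \<rightarrow> V \<rightarrow> X, alphabets {..<m}, {..<n};
   the Markov chain is generated as p(u) p(v|u) p(x|v). *)
definition Phi :: "('x::finite \<Rightarrow> 'y::finite \<Rightarrow> real) \<Rightarrow> ('x \<Rightarrow> 'z::finite \<Rightarrow> real) \<Rightarrow> real \<Rightarrow> real" where
  "Phi W Wz mu = Sup {obj mu W Wz {..<m} {..<n} (\<lambda>u v x. pU u * pVU u v * pXV v x) |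
      (m::nat) (n::nat) pU pVU pXV.
      is_pmf {..<m} pU \<and> (\<forall>u<m. is_pmf {..<n} (pVU u)) \<and> (\<forall>v<n. is_pmf UNIV (pXV v))}"

definition VX_values :: "('x::finite \<Rightarrow> 'y::finite \<Rightarrow> real) \<Rightarrow> ('x \<Rightarrow> 'z::finite \<Rightarrow> real) \<Rightarrow> real \<Rightarrow> real set" where
  "VX_values W Wz mu = {obj mu W Wz {..<m} (UNIV::'x set)
        (\<lambda>u v x. pU u * pXU u x * (if v = x then 1 else 0)) |
      (m::nat) pU pXU. m \<le> card (UNIV::'x set) \<and> is_pmf {..<m} pU \<and> (\<forall>u<m. is_pmf UNIV (pXU u))}"

definition IXY :: "('x::finite \<Rightarrow> real) \<Rightarrow> ('x \<Rightarrow> 'y::finite \<Rightarrow> real) \<Rightarrow> real" where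
  "IXY P W = mi UNIV UNIV (\<lambda>x y. P x * W x y)"

definition more_capable :: "('x::finite \<Rightarrow> 'y::finite \<Rightarrow> real) \<Rightarrow> ('x \<Rightarrow> 'z::finite \<Rightarrow> real) \<Rightarrow> bool" where
  "more_capable W Wz \<longleftrightarrow> (\<forall>P. is_pmf UNIV P \<longrightarrow> IXY P W - IXY P Wz \<ge> 0)"

end

theory Submission
  imports Defs "HOL-Analysis.Analysis" "HOL-Real_Asymp.Real_Asymp"
begin


definition phi :: "real \<Rightarrow> real" where
  "phi t = (if t \<le> 0 then 0 else t * log 2 t)"

definition mixP :: "'i set \<Rightarrow> ('i \<Rightarrow> real) \<Rightarrow> ('i \<Rightarrow> 'x \<Rightarrow> real) \<Rightarrow> 'x \<Rightarrow> real" where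
  "mixP I w Pt = (\<lambda>x. \<Sum>i\<in>I. w i * Pt i x)"

lemma mi_mix:
  fixes w :: "'b \<Rightarrow> real" and r :: "'b \<Rightarrow> 'y::finite \<Rightarrow> real"
  assumes I: "finite I" and w: "\<forall>i\<in>I. w i \<ge> 0" and r: "\<forall>i\<in>I. \<forall>y. r i y \<ge> 0"
    and rs: "\<forall>i\<in>I. sum (r i) UNIV = 1"
  shows "mi I UNIV (\<lambda>i y. w i * r i y)
     = (\<Sum>i\<in>I. w i * (\<Sum>y\<in>UNIV. phi (r i y))) - (\<Sum>y\<in>UNIV. phi (\<Sum>i\<in>I. w i * r i y))"
proof -
  define Oy where "Oy = (\<lambda>y. \<Sum>i\<in>I. w i * r i y)"
  define L where "L = (\<lambda>y. if Oy y = 0 then 0 else log 2 (Oy y))"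
  have o0: "Oy y \<ge> 0" for y unfolding Oy_def using w r by (auto intro: sum_nonneg)
  have oge: "w i * r i y \<le> Oy y" if "i \<in> I" for i y
    unfolding Oy_def using that w r I by (intro member_le_sum) auto
  have marg1: "(\<Sum>c'\<in>UNIV. w i * r i c') = w i" if "i \<in> I" for i
    using rs that by (simp add: sum_distrib_left[symmetric])
  have tm: "(if w i * r i y = 0 then 0
       else w i * r i y * log 2 (w i * r i y / ((\<Sum>c'\<in>UNIV. w i * r i c') * (\<Sum>b'\<in>I. w b' * r b' y))))
       = w i * phi (r i y) - w i * r i y * L y" if i: "i \<in> I" for i y
  proof (cases "w i * r i y = 0")
    case True
    then show ?thesis by (auto simp: phi_def)
  next
    case False
    have wp: "w i > 0" using False w i by (metis less_eq_real_def mult_zero_left)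
    have rp: "r i y > 0" using False r i by (metis less_eq_real_def mult_zero_right)
    have op: "Oy y > 0" using oge[OF i, of y] wp rp by (smt (verit) mult_pos_pos)
    have e: "(\<Sum>c'\<in>UNIV. w i * r i c') * (\<Sum>b'\<in>I. w b' * r b' y) = w i * Oy y"
      using marg1[OF i] by (simp add: Oy_def)
    have q: "w i * r i y / (w i * Oy y) = r i y / Oy y" using wp by simp
    have lg: "log 2 (r i y / Oy y) = log 2 (r i y) - log 2 (Oy y)"
      using rp op by (simp add: log_divide)
    have ph: "phi (r i y) = r i y * log 2 (r i y)" using rp by (simp add: phi_def)
    have Ly: "L y = log 2 (Oy y)" using op by (simp add: L_def)
    have "w i * r i y * log 2 (w i * r i y / (w i * Oy y)) = w i * phi (r i y) - w i * r i y * L y"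
      unfolding q lg ph Ly by (simp add: algebra_simps)
    then show ?thesis using False e by simp
  qed
  have "mi I UNIV (\<lambda>i y. w i * r i y) = (\<Sum>i\<in>I. \<Sum>y\<in>UNIV. w i * phi (r i y) - w i * r i y * L y)"
    unfolding mi_def using tm by (intro sum.cong refl) auto
  also have "\<dots> = (\<Sum>i\<in>I. w i * (\<Sum>y\<in>UNIV. phi (r i y))) - (\<Sum>y\<in>UNIV. Oy y * L y)"
    by (simp add: sum_subtractf sum_distrib_left sum_distrib_right Oy_def sum.swap[of _ I])
  also have "(\<Sum>y\<in>UNIV. Oy y * L y) = (\<Sum>y\<in>UNIV. phi (Oy y))"
  proof (intro sum.cong refl)
    fix y show "Oy y * L y = phi (Oy y)" using o0[of y] unfolding L_def phi_def by auto
  qed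
  finally show ?thesis by (simp add: Oy_def)
qed

lemma mi_nonneg:
  assumes B: "finite B" and C: "finite C" and p: "\<forall>b\<in>B. \<forall>c\<in>C. p b c \<ge> 0"
    and s: "(\<Sum>b\<in>B. \<Sum>c\<in>C. p b c) = 1"
  shows "mi B C p \<ge> 0"
proof -
  define pb where "pb = (\<lambda>b. \<Sum>c'\<in>C. p b c')"
  define pc where "pc = (\<lambda>c. \<Sum>b'\<in>B. p b' c)"
  have l2: "ln 2 > (0::real)" by simp
  have tm: "(if p b c = 0 then 0 else p b c * log 2 (p b c / (pb b * pc c)))
      \<ge> (p b c - pb b * pc c) / ln 2" if "b \<in> B" "c \<in> C" for b c
  proof (cases "p b c = 0")
    case True
    have "pb b \<ge> 0" "pc c \<ge> 0" unfolding pb_def pc_def using p that by (auto intro: sum_nonneg)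
    then show ?thesis using True l2 by (simp add: divide_nonpos_pos)
  next
    case False
    have pp: "p b c > 0" using False p that by force
    have "p b c \<le> pb b" unfolding pb_def using p that C by (intro member_le_sum) auto
    moreover have "p b c \<le> pc c" unfolding pc_def using p that B by (intro member_le_sum) auto
    ultimately have q: "pb b * pc c > 0" using pp by (smt (verit) mult_pos_pos)
    have "ln (pb b * pc c / p b c) \<le> pb b * pc c / p b c - 1"
      using q pp by (intro ln_le_minus_one) simp
    moreover have "ln (p b c / (pb b * pc c)) = - ln (pb b * pc c / p b c)"
      using q pp by (simp add: ln_div)
    ultimately have "ln (p b c / (pb b * pc c)) \<ge> 1 - pb b * pc c / p b c" by simp
    then have "p b c * ln (p b c / (pb b * pc c)) \<ge> p b c * (1 - pb b * pc c / p b c)"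
      using pp by (simp add: mult_left_mono)
    also have "p b c * (1 - pb b * pc c / p b c) = p b c - pb b * pc c" using pp by (simp add: field_simps)
    finally have "p b c * ln (p b c / (pb b * pc c)) / ln 2 \<ge> (p b c - pb b * pc c) / ln 2"
      using l2 by (simp add: divide_right_mono)
    then show ?thesis using False by (simp add: log_def)
  qed
  have "mi B C p = (\<Sum>b\<in>B. \<Sum>c\<in>C. if p b c = 0 then 0 else p b c * log 2 (p b c / (pb b * pc c)))"
    unfolding pb_def pc_def mi_def by simp
  also have "\<dots> \<ge> (\<Sum>b\<in>B. \<Sum>c\<in>C. (p b c - pb b * pc c) / ln 2)"
    using tm by (intro sum_mono) auto
  finally have "mi B C p \<ge> (\<Sum>b\<in>B. \<Sum>c\<in>C. (p b c - pb b * pc c) / ln 2)" .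
  also have "(\<Sum>b\<in>B. \<Sum>c\<in>C. (p b c - pb b * pc c) / ln 2)
     = ((\<Sum>b\<in>B. \<Sum>c\<in>C. p b c) - (\<Sum>b\<in>B. pb b) * (\<Sum>c\<in>C. pc c)) / ln 2"
    by (simp add: sum_divide_distrib[symmetric] sum_subtractf sum_product)
  also have "(\<Sum>b\<in>B. pb b) = 1" using s by (simp add: pb_def)
  also have "(\<Sum>c\<in>C. pc c) = 1" using s by (simp add: pc_def sum.swap[of _ C])
  finally show ?thesis using s by simp
qed



definition fgap :: "('x::finite \<Rightarrow> 'y::finite \<Rightarrow> real) \<Rightarrow> ('x \<Rightarrow> 'z::finite \<Rightarrow> real) \<Rightarrow> ('x \<Rightarrow> real) \<Rightarrow> real" where
  "fgap W Wz Q = IXY Q W - IXY Q Wz"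

lemma IXY_nonneg:
  assumes P: "is_pmf UNIV P" and W: "channel W"
  shows "IXY P W \<ge> 0"
  unfolding IXY_def
proof (rule mi_nonneg)
  show "\<forall>b\<in>UNIV. \<forall>c\<in>UNIV. 0 \<le> P b * W b c" using P W by (auto simp: is_pmf_def channel_def)
  have "(\<Sum>b\<in>UNIV. \<Sum>c\<in>UNIV. P b * W b c) = (\<Sum>b\<in>UNIV. P b)"
    using W by (simp add: sum_distrib_left[symmetric] channel_def is_pmf_def)
  then show "(\<Sum>b\<in>UNIV. \<Sum>c\<in>UNIV. P b * W b c) = 1" using P by (simp add: is_pmf_def)
qed auto

lemma IXY_formula:
  assumes P: "\<forall>x. P x \<ge> 0" and W: "channel W"
  shows "IXY P W = (\<Sum>x\<in>UNIV. P x * (\<Sum>y\<in>UNIV. phi (W x y))) - (\<Sum>y\<in>UNIV. phi (\<Sum>x\<in>UNIV. P x * W x y))"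
  unfolding IXY_def using P W by (intro mi_mix) (auto simp: channel_def is_pmf_def)

lemma mix_IXY:
  fixes Pt :: "'i \<Rightarrow> 'x::finite \<Rightarrow> real" and W :: "'x \<Rightarrow> 'y::finite \<Rightarrow> real"
  assumes I: "finite I" and w: "\<forall>i\<in>I. w i \<ge> 0" and Pt: "\<forall>i\<in>I. is_pmf UNIV (Pt i)" and W: "channel W"
  shows "mi I UNIV (\<lambda>i y. w i * (\<Sum>x\<in>UNIV. Pt i x * W x y))
     = IXY (mixP I w Pt) W - (\<Sum>i\<in>I. w i * IXY (Pt i) W)"
proof -
  define c where "c = (\<lambda>x. \<Sum>y\<in>UNIV. phi (W x y))"
  have Wn: "\<forall>x y. W x y \<ge> 0" and Ws: "\<forall>x. sum (W x) UNIV = 1" using W by (auto simp: channel_def is_pmf_def)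
  have Ptn: "\<forall>i\<in>I. \<forall>x. Pt i x \<ge> 0" and Pts: "\<forall>i\<in>I. sum (Pt i) UNIV = 1"
    using Pt by (auto simp: is_pmf_def)
  have "mi I UNIV (\<lambda>i y. w i * (\<Sum>x\<in>UNIV. Pt i x * W x y))
     = (\<Sum>i\<in>I. w i * (\<Sum>y\<in>UNIV. phi (\<Sum>x\<in>UNIV. Pt i x * W x y)))
       - (\<Sum>y\<in>UNIV. phi (\<Sum>i\<in>I. w i * (\<Sum>x\<in>UNIV. Pt i x * W x y)))"
  proof (rule mi_mix[OF I w])
    show "\<forall>i\<in>I. \<forall>y. 0 \<le> (\<Sum>x\<in>UNIV. Pt i x * W x y)" using Ptn Wn by (auto intro: sum_nonneg)
    show "\<forall>i\<in>I. (\<Sum>y\<in>UNIV. \<Sum>x\<in>UNIV. Pt i x * W x y) = 1"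
    proof
      fix i assume i: "i \<in> I"
      have "(\<Sum>y\<in>UNIV. \<Sum>x\<in>UNIV. Pt i x * W x y) = (\<Sum>x\<in>UNIV. Pt i x * (\<Sum>y\<in>UNIV. W x y))"
        by (subst sum.swap) (simp add: sum_distrib_left)
      then show "(\<Sum>y\<in>UNIV. \<Sum>x\<in>UNIV. Pt i x * W x y) = 1" using Ws Pts i by simp
    qed
  qed
  moreover have mixn: "\<forall>x. mixP I w Pt x \<ge> 0" unfolding mixP_def using w Ptn by (auto intro: sum_nonneg)
  moreover have "IXY (mixP I w Pt) W = (\<Sum>x\<in>UNIV. mixP I w Pt x * c x) - (\<Sum>y\<in>UNIV. phi (\<Sum>x\<in>UNIV. mixP I w Pt x * W x y))"
    unfolding c_def using IXY_formula[OF mixn W] .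
  moreover have "\<And>i. i \<in> I \<Longrightarrow> IXY (Pt i) W = (\<Sum>x\<in>UNIV. Pt i x * c x) - (\<Sum>y\<in>UNIV. phi (\<Sum>x\<in>UNIV. Pt i x * W x y))"
    unfolding c_def using IXY_formula[OF _ W] Ptn by blast
  moreover have "(\<Sum>x\<in>UNIV. mixP I w Pt x * W x y) = (\<Sum>i\<in>I. w i * (\<Sum>x\<in>UNIV. Pt i x * W x y))" for y
    unfolding mixP_def sum_distrib_right sum_distrib_left by (subst sum.swap) (simp add: mult.assoc)
  moreover have "(\<Sum>x\<in>UNIV. mixP I w Pt x * c x) = (\<Sum>i\<in>I. w i * (\<Sum>x\<in>UNIV. Pt i x * c x))"
    unfolding mixP_def sum_distrib_right sum_distrib_left by (subst sum.swap) (simp add: mult.assoc)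
  ultimately show ?thesis
    by (simp add: right_diff_distrib sum_subtractf)
qed

lemma cmi_term:
  fixes s :: "'b \<Rightarrow> 'c \<Rightarrow> real"
  assumes s1: "(\<Sum>b\<in>B. \<Sum>c\<in>C. s b c) = 1"
  shows "(\<Sum>b\<in>B. \<Sum>c\<in>C. if al * s b c = 0 then 0
          else al * s b c * log 2 (al * s b c * (\<Sum>b'\<in>B. \<Sum>c'\<in>C. al * s b' c') /
               ((\<Sum>c'\<in>C. al * s b c') * (\<Sum>b'\<in>B. al * s b' c)))) = al * mi B C s"
proof (cases "al = 0")
  case True then show ?thesis by simp
next
  case False
  have e1: "(\<Sum>b'\<in>B. al * (\<Sum>c'\<in>C. s b' c')) = al"
    using s1 by (simp add: sum_distrib_left[symmetric])
  have e2: "(\<Sum>c'\<in>C. al * s b c') = al * (\<Sum>c'\<in>C. s b c')" for b by (simp add: sum_distrib_left)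
  have e3: "(\<Sum>b'\<in>B. al * s b' c) = al * (\<Sum>b'\<in>B. s b' c)" for c by (simp add: sum_distrib_left)
  have r: "al * s b c * al / (al * X * (al * Y)) = s b c / (X * Y)" for X Y b c
  proof -
    have "al * s b c * al / (al * X * (al * Y)) = (al * al) * s b c / ((al * al) * (X * Y))"
      by (simp only: mult.assoc mult.commute mult.left_commute)
    also have "\<dots> = s b c / (X * Y)" using False by simp
    finally show ?thesis .
  qed
  have t: "(if al * s b c = 0 then 0
        else al * s b c * log 2 (s b c / (X * Y))) = al * (if s b c = 0 then 0
        else s b c * log 2 (s b c / (X * Y)))" for X Y b c
    using False by simp
  show ?thesis unfolding e1 e2 e3 r t unfolding mi_def sum_distrib_left by (rule refl)
qed

lemma cmi_scale:
  assumes s1: "\<forall>a\<in>A. (\<Sum>b\<in>B. \<Sum>c\<in>C. s a b c) = 1"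
  shows "cmi A B C (\<lambda>a b c. al a * s a b c) = (\<Sum>a\<in>A. al a * mi B C (s a))"
  unfolding cmi_def using s1 by (intro sum.cong refl cmi_term) auto



lemma out_sum:
  assumes "is_pmf UNIV P" "channel W"
  shows "(\<Sum>y\<in>UNIV. \<Sum>x\<in>UNIV. P x * (W x y :: real)) = 1"
proof -
  have "(\<Sum>y\<in>UNIV. \<Sum>x\<in>UNIV. P x * W x y) = (\<Sum>x\<in>UNIV. P x * (\<Sum>y\<in>UNIV. W x y))"
    by (subst sum.swap) (simp add: sum_distrib_left)
  then show ?thesis using assms by (simp add: is_pmf_def channel_def)
qed

lemma obj_eq:
  fixes W :: "'x::finite \<Rightarrow> 'y::finite \<Rightarrow> real" and Wz :: "'x \<Rightarrow> 'z::finite \<Rightarrow> real"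
    and pU :: "'u \<Rightarrow> real" and pVU :: "'u \<Rightarrow> 'v \<Rightarrow> real" and pXV :: "'v \<Rightarrow> 'x \<Rightarrow> real"
  assumes A: "finite A" and B: "finite B" and pU: "\<forall>u\<in>A. pU u \<ge> 0"
    and pVU: "\<forall>u\<in>A. is_pmf B (pVU u)" and pXV: "\<forall>v\<in>B. is_pmf UNIV (pXV v)"
    and W: "channel W" and Wz: "channel Wz"
  shows "obj mu W Wz A B (\<lambda>u v x. pU u * pVU u v * pXV v x)
     = mu * (IXY (mixP B (\<lambda>v. \<Sum>u\<in>A. pU u * pVU u v) pXV) W
             - (\<Sum>v\<in>B. (\<Sum>u\<in>A. pU u * pVU u v) * IXY (pXV v) W))
       + (\<Sum>u\<in>A. pU u * (fgap W Wz (mixP B (pVU u) pXV) - (\<Sum>v\<in>B. pVU u v * fgap W Wz (pXV v))))"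
proof -
  define pV where "pV = (\<lambda>v. \<Sum>u\<in>A. pU u * pVU u v)"
  have pVn: "\<forall>v\<in>B. pV v \<ge> 0" unfolding pV_def using pU pVU by (auto simp: is_pmf_def intro!: sum_nonneg)
  have m1: "(\<lambda>v y. \<Sum>u\<in>A. \<Sum>x\<in>UNIV. pU u * pVU u v * pXV v x * W x y)
      = (\<lambda>v y. pV v * (\<Sum>x\<in>UNIV. pXV v x * W x y))"
    unfolding pV_def by (intro ext) (simp add: sum_product mult.assoc)
  have m2: "(\<lambda>v y. \<Sum>u\<in>A. \<Sum>x\<in>UNIV. pU u * pVU u v * pXV v x * Wz x y)
      = (\<lambda>v y. pV v * (\<Sum>x\<in>UNIV. pXV v x * Wz x y))"
    unfolding pV_def by (intro ext) (simp add: sum_product mult.assoc)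
  have c1: "(\<lambda>u v y. \<Sum>x\<in>UNIV. pU u * pVU u v * pXV v x * W x y)
      = (\<lambda>u v y. pU u * (pVU u v * (\<Sum>x\<in>UNIV. pXV v x * W x y)))"
    by (intro ext) (simp add: sum_distrib_left mult.assoc)
  have c2: "(\<lambda>u v y. \<Sum>x\<in>UNIV. pU u * pVU u v * pXV v x * Wz x y)
      = (\<lambda>u v y. pU u * (pVU u v * (\<Sum>x\<in>UNIV. pXV v x * Wz x y)))"
    by (intro ext) (simp add: sum_distrib_left mult.assoc)
  have s1: "\<forall>u\<in>A. (\<Sum>v\<in>B. \<Sum>y\<in>UNIV. pVU u v * (\<Sum>x\<in>UNIV. pXV v x * (V x y :: real))) = 1"
    if V: "channel V" for V :: "'x \<Rightarrow> 'w::finite \<Rightarrow> real"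
  proof
    fix u assume u: "u \<in> A"
    have "(\<Sum>v\<in>B. \<Sum>y\<in>UNIV. pVU u v * (\<Sum>x\<in>UNIV. pXV v x * V x y)) = (\<Sum>v\<in>B. pVU u v)"
      using out_sum[OF _ V] pXV by (simp add: sum_distrib_left[symmetric])
    then show "(\<Sum>v\<in>B. \<Sum>y\<in>UNIV. pVU u v * (\<Sum>x\<in>UNIV. pXV v x * V x y)) = 1"
      using pVU u by (simp add: is_pmf_def)
  qed
  have pVUn: "\<forall>v\<in>B. pVU u v \<ge> 0" if "u \<in> A" for u using pVU that by (simp add: is_pmf_def)
  have cW: "cmi A B UNIV (\<lambda>u v y. pU u * (pVU u v * (\<Sum>x\<in>UNIV. pXV v x * W x y)))
      = (\<Sum>u\<in>A. pU u * (IXY (mixP B (pVU u) pXV) W - (\<Sum>v\<in>B. pVU u v * IXY (pXV v) W)))"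
    by (subst cmi_scale[OF s1[OF W]]) (use mix_IXY[OF B pVUn pXV W] in simp)
  have cZ: "cmi A B UNIV (\<lambda>u v y. pU u * (pVU u v * (\<Sum>x\<in>UNIV. pXV v x * Wz x y)))
      = (\<Sum>u\<in>A. pU u * (IXY (mixP B (pVU u) pXV) Wz - (\<Sum>v\<in>B. pVU u v * IXY (pXV v) Wz)))"
    by (subst cmi_scale[OF s1[OF Wz]]) (use mix_IXY[OF B pVUn pXV Wz] in simp)
  have mW: "mi B UNIV (\<lambda>v y. pV v * (\<Sum>x\<in>UNIV. pXV v x * W x y))
     = IXY (mixP B pV pXV) W - (\<Sum>v\<in>B. pV v * IXY (pXV v) W)"
    using mix_IXY[OF B pVn pXV W] .
  show ?thesis
    unfolding obj_def m1 c1 c2 cW cZ mW unfolding pV_def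
    by (simp add: fgap_def sum_subtractf right_diff_distrib sum.distrib[symmetric] algebra_simps)
qed



definition Gv :: "real \<Rightarrow> ('x::finite \<Rightarrow> 'y::finite \<Rightarrow> real) \<Rightarrow> ('x \<Rightarrow> 'z::finite \<Rightarrow> real)
   \<Rightarrow> 'i set \<Rightarrow> ('i \<Rightarrow> real) \<Rightarrow> ('i \<Rightarrow> 'x \<Rightarrow> real) \<Rightarrow> real" where
  "Gv mu W Wz I w Pt = mu * IXY (mixP I w Pt) W + (\<Sum>i\<in>I. w i * fgap W Wz (Pt i))"

lemma delta_pmf: "is_pmf UNIV (\<lambda>x::'x::finite. if v = x then 1 else 0 :: real)"
  by (simp add: is_pmf_def)

lemma ite1: "(if P then 1 else 0) * (a::real) = (if P then a else 0)" by simp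

lemma IXY_delta:
  assumes W: "channel W"
  shows "IXY (\<lambda>x. if v = x then 1 else 0) W = 0"
  using IXY_formula[OF _ W, of "\<lambda>x. if v = x then 1 else 0"]
  by (simp add: ite1)

lemma fgap_delta:
  assumes "channel W" "channel Wz"
  shows "fgap W Wz (\<lambda>x. if v = x then 1 else 0) = 0"
  using IXY_delta[OF assms(1)] IXY_delta[OF assms(2)] by (simp add: fgap_def)

lemma mixP_pmf:
  assumes I: "finite I" and w: "is_pmf I w" and Pt: "\<forall>i\<in>I. is_pmf UNIV (Pt i)"
  shows "is_pmf UNIV (mixP I w Pt :: 'x::finite \<Rightarrow> real)"
proof -
  have "(\<Sum>x\<in>UNIV. \<Sum>i\<in>I. w i * Pt i x) = (\<Sum>i\<in>I. w i * (\<Sum>x\<in>UNIV. Pt i x))"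
    by (subst sum.swap) (simp add: sum_distrib_left)
  also have "\<dots> = (\<Sum>i\<in>I. w i)" using Pt by (simp add: is_pmf_def)
  finally show ?thesis using w Pt unfolding mixP_def is_pmf_def
    by (auto intro!: sum_nonneg)
qed

lemma mixP_assoc:
  "mixP B (\<lambda>v. \<Sum>u\<in>A. pU u * pVU u v) pXV = mixP A pU (\<lambda>u. mixP B (pVU u) pXV)"
  unfolding mixP_def sum_distrib_right sum_distrib_left
  by (intro ext, subst sum.swap) (simp add: mult.assoc)

lemma mixP_delta_UNIV: "mixP UNIV w (\<lambda>v x. if v = x then 1 else 0) = (w :: 'x::finite \<Rightarrow> real)"
  unfolding mixP_def by (simp add: mult.commute[of "w _"] ite1)

lemma mixP_delta_bij:
  assumes g: "bij_betw g B (UNIV :: 'x::finite set)"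
  shows "mixP B (\<lambda>k. F (g k)) (\<lambda>k x. if g k = x then 1 else 0) = (F :: 'x \<Rightarrow> real)"
proof
  fix x
  have "mixP B (\<lambda>k. F (g k)) (\<lambda>k x. if g k = x then 1 else 0) x
        = (\<Sum>k\<in>B. (\<lambda>z. F z * (if z = x then 1 else 0)) (g k))"
    unfolding mixP_def by simp
  also have "\<dots> = (\<Sum>z\<in>UNIV. F z * (if z = x then 1 else 0))"
    using sum.reindex_bij_betw[OF g] .
  also have "\<dots> = F x" by (simp add: mult.commute[of "F _"] ite1)
  finally show "mixP B (\<lambda>k. F (g k)) (\<lambda>k x. if g k = x then 1 else 0) x = F x" .
qed

lemma S_le_Gv:
  fixes W :: "'x::finite \<Rightarrow> 'y::finite \<Rightarrow> real" and Wz :: "'x \<Rightarrow> 'z::finite \<Rightarrow> real"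
  assumes A: "finite A" and B: "finite B" and pU: "is_pmf A pU"
    and pVU: "\<forall>u\<in>A. is_pmf B (pVU u)" and pXV: "\<forall>v\<in>B. is_pmf UNIV (pXV v)"
    and W: "channel W" and Wz: "channel Wz" and mc: "more_capable W Wz" and mu: "mu \<ge> 0"
  shows "obj mu W Wz A B (\<lambda>u v x. pU u * pVU u v * pXV v x) \<le> Gv mu W Wz A pU (\<lambda>u. mixP B (pVU u) pXV)"
proof -
  have pUn: "\<forall>u\<in>A. pU u \<ge> 0" using pU by (simp add: is_pmf_def)
  have S1: "(\<Sum>v\<in>B. (\<Sum>u\<in>A. pU u * pVU u v) * IXY (pXV v) W) \<ge> 0"
    using pUn pVU pXV IXY_nonneg[OF _ W] by (auto simp: is_pmf_def intro!: sum_nonneg mult_nonneg_nonneg)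
  have fg: "fgap W Wz Q \<ge> 0" if "is_pmf UNIV Q" for Q using mc that by (simp add: more_capable_def fgap_def)
  have S2: "pU u * (fgap W Wz (mixP B (pVU u) pXV) - (\<Sum>v\<in>B. pVU u v * fgap W Wz (pXV v)))
      \<le> pU u * fgap W Wz (mixP B (pVU u) pXV)" if u: "u \<in> A" for u
  proof -
    have "(\<Sum>v\<in>B. pVU u v * fgap W Wz (pXV v)) \<ge> 0"
      using pVU u pXV fg by (auto simp: is_pmf_def intro!: sum_nonneg mult_nonneg_nonneg)
    then show ?thesis using pUn u by (simp add: mult_left_mono)
  qed
  have "obj mu W Wz A B (\<lambda>u v x. pU u * pVU u v * pXV v x)
     = mu * (IXY (mixP B (\<lambda>v. \<Sum>u\<in>A. pU u * pVU u v) pXV) W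
             - (\<Sum>v\<in>B. (\<Sum>u\<in>A. pU u * pVU u v) * IXY (pXV v) W))
       + (\<Sum>u\<in>A. pU u * (fgap W Wz (mixP B (pVU u) pXV) - (\<Sum>v\<in>B. pVU u v * fgap W Wz (pXV v))))"
    using obj_eq[OF A B pUn pVU pXV W Wz] .
  also have "\<dots> \<le> mu * IXY (mixP B (\<lambda>v. \<Sum>u\<in>A. pU u * pVU u v) pXV) W
       + (\<Sum>u\<in>A. pU u * fgap W Wz (mixP B (pVU u) pXV))"
    using S1 S2 mu by (intro add_mono sum_mono) (auto simp: mult_left_mono right_diff_distrib)
  also have "\<dots> = Gv mu W Wz A pU (\<lambda>u. mixP B (pVU u) pXV)"
    unfolding Gv_def mixP_assoc ..
  finally show ?thesis .
qed

lemma VX_eq_Gv: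
  fixes W :: "'x::finite \<Rightarrow> 'y::finite \<Rightarrow> real" and Wz :: "'x \<Rightarrow> 'z::finite \<Rightarrow> real"
  assumes A: "finite A" and pU: "is_pmf A pU" and pXU: "\<forall>u\<in>A. is_pmf UNIV (pXU u)"
    and W: "channel W" and Wz: "channel Wz"
  shows "obj mu W Wz A (UNIV::'x set) (\<lambda>u v x. pU u * pXU u x * (if v = x then 1 else 0))
      = Gv mu W Wz A pU pXU"
proof -
  have pUn: "\<forall>u\<in>A. pU u \<ge> 0" using pU by (simp add: is_pmf_def)
  have eq: "(\<lambda>u v x. pU u * pXU u x * (if v = x then 1 else 0))
     = (\<lambda>u v x. pU u * pXU u v * (if v = x then 1 else (0::real)))"
    by (intro ext) auto
  show ?thesis unfolding eq
    using obj_eq[OF A finite_class.finite_UNIV pUn pXU, of "\<lambda>v x. if v = x then 1 else 0", OF _ W Wz]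
    by (simp add: delta_pmf IXY_delta[OF W] fgap_delta[OF W Wz] mixP_delta_UNIV Gv_def mixP_def[of A])
qed

lemma Gv_in_S:
  fixes W :: "'x::finite \<Rightarrow> 'y::finite \<Rightarrow> real" and Wz :: "'x \<Rightarrow> 'z::finite \<Rightarrow> real"
  assumes A: "finite A" and pU: "is_pmf A pU" and pXU: "\<forall>u\<in>A. is_pmf UNIV (pXU u)"
    and W: "channel W" and Wz: "channel Wz" and g: "bij_betw g B (UNIV::'x set)" and B: "finite B"
  shows "obj mu W Wz A B (\<lambda>u v x. pU u * pXU u (g v) * (if g v = x then 1 else 0))
      = Gv mu W Wz A pU pXU"
proof -
  have pUn: "\<forall>u\<in>A. pU u \<ge> 0" using pU by (simp add: is_pmf_def)
  have pVU: "\<forall>u\<in>A. is_pmf B (\<lambda>v. pXU u (g v))"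
  proof
    fix u assume "u \<in> A"
    then show "is_pmf B (\<lambda>v. pXU u (g v))"
      using pXU sum.reindex_bij_betw[OF g, of "pXU u"] by (simp add: is_pmf_def)
  qed
  have pXV: "\<forall>v\<in>B. is_pmf UNIV (\<lambda>x. if g v = x then 1 else 0::real)" by (simp add: delta_pmf)
  have e1: "mixP B (\<lambda>v. \<Sum>u\<in>A. pU u * pXU u (g v)) (\<lambda>v x. if g v = x then 1 else 0) = mixP A pU pXU"
    using mixP_delta_bij[OF g, of "mixP A pU pXU"] by (simp add: mixP_def[of A])
  have e2: "mixP B (\<lambda>v. pXU u (g v)) (\<lambda>v x. if g v = x then 1 else 0) = pXU u" for u
    using mixP_delta_bij[OF g] .
  show ?thesis
    using obj_eq[OF A B pUn pVU pXV W Wz]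
    by (simp add: e1 e2 IXY_delta[OF W] fgap_delta[OF W Wz] Gv_def)
qed



lemma sum_lessThan_Suc_if:
  "(\<Sum>k<Suc N. if k = N then a else f k) = a + (\<Sum>k<N. f k)"
  by (simp add: lessThan_Suc)

lemma part2:
  fixes W :: "'x::finite \<Rightarrow> 'y::finite \<Rightarrow> real" and Wz :: "'x \<Rightarrow> 'z::finite \<Rightarrow> real"
  assumes W: "channel W" and Wz: "channel Wz" and nmc: "\<not> more_capable W Wz"
    and Ps: "is_pmf UNIV Ps" and Pspos: "\<forall>x. Ps x > 0"
    and Psmax: "\<forall>P. is_pmf UNIV P \<longrightarrow> IXY P W - IXY P Wz \<le> IXY Ps W - IXY Ps Wz"
  shows "\<exists>(n::nat) pV pXV. is_pmf {..<n} pV \<and> (\<forall>v<n. is_pmf UNIV (pXV v)) \<and>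
                 mi {..<n} UNIV (\<lambda>v y. \<Sum>x\<in>UNIV. pV v * pXV v x * W x y)
                 - mi {..<n} UNIV (\<lambda>v z. \<Sum>x\<in>UNIV. pV v * pXV v x * Wz x z)
                 > (GREATEST f. \<exists>P. is_pmf UNIV P \<and> f = IXY P W - IXY P Wz)"
proof -
  have G: "(GREATEST f. \<exists>P. is_pmf UNIV P \<and> f = IXY P W - IXY P Wz) = fgap W Wz Ps"
    unfolding fgap_def using Ps Psmax by (intro Greatest_equality) auto
  obtain Q where Q: "is_pmf UNIV Q" and Qneg: "fgap W Wz Q < 0"
    using nmc unfolding more_capable_def fgap_def by force
  define N where "N = card (UNIV :: 'x set)"
  obtain g where g: "bij_betw g {..<N} (UNIV :: 'x set)"
    using ex_bij_betw_nat_finite[of "UNIV :: 'x set"] unfolding N_def lessThan_atLeast0 by auto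
  define lam where "lam = Min (range Ps)"
  have lampos: "lam > 0" unfolding lam_def using Pspos by (simp)
  have lamle: "lam \<le> Ps z" for z unfolding lam_def by simp
  have Q1: "Q z \<le> 1" for z
  proof -
    have "Q z \<le> sum Q UNIV" using Q by (intro member_le_sum) (auto simp: is_pmf_def)
    then show ?thesis using Q by (simp add: is_pmf_def)
  qed
  have Qn: "Q z \<ge> 0" for z using Q by (simp add: is_pmf_def)
  have rn: "Ps z - lam * Q z \<ge> 0" for z
  proof -
    have "lam * Q z \<le> lam * 1" using Q1 lampos by (intro mult_left_mono) auto
    then show ?thesis using lamle[of z] by simp
  qed
  define F where "F = (\<lambda>z. Ps z - lam * Q z)"
  define pV where "pV = (\<lambda>k. if k = N then lam else F (g k))"
  define pXV where "pXV = (\<lambda>k. if k = N then Q else (\<lambda>x. if g k = x then 1 else 0::real))"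
  have sF: "(\<Sum>k<N. F (g k)) = 1 - lam"
  proof -
    have "(\<Sum>k<N. F (g k)) = sum F UNIV" using sum.reindex_bij_betw[OF g] .
    also have "\<dots> = sum Ps UNIV - lam * sum Q UNIV" by (simp add: F_def sum_subtractf sum_distrib_left)
    finally show ?thesis using Ps Q by (simp add: is_pmf_def)
  qed
  have pVp: "is_pmf {..<Suc N} pV"
    unfolding is_pmf_def pV_def sum_lessThan_Suc_if sF using lampos rn by (auto simp: F_def)
  have pXVp: "\<forall>v<Suc N. is_pmf UNIV (pXV v)" unfolding pXV_def using Q by (auto simp: delta_pmf)
  have pVn: "\<forall>v\<in>{..<Suc N}. pV v \<ge> 0" using pVp by (simp add: is_pmf_def)
  have pXV': "\<forall>v\<in>{..<Suc N}. is_pmf UNIV (pXV v)" using pXVp by simp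
  have mix: "mixP {..<Suc N} pV pXV = Ps"
  proof
    fix x
    have "mixP {..<Suc N} pV pXV x = lam * Q x + mixP {..<N} (\<lambda>k. F (g k)) (\<lambda>k x. if g k = x then 1 else 0) x"
      unfolding mixP_def pV_def pXV_def by (simp add: lessThan_Suc)
    also have "\<dots> = Ps x" using mixP_delta_bij[OF g, of F] by (simp add: F_def)
    finally show "mixP {..<Suc N} pV pXV x = Ps x" .
  qed
  have sumI: "(\<Sum>v<Suc N. pV v * IXY (pXV v) V) = lam * IXY Q V" if V: "channel V" for V :: "'x \<Rightarrow> 'w::finite \<Rightarrow> real"
    unfolding pV_def pXV_def by (simp add: lessThan_Suc IXY_delta[OF V])
  have e: "(\<lambda>v y. \<Sum>x\<in>UNIV. pV v * pXV v x * V x y) = (\<lambda>v y. pV v * (\<Sum>x\<in>UNIV. pXV v x * V x y))"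
    for V :: "'x \<Rightarrow> 'w::finite \<Rightarrow> real"
    by (intro ext) (simp add: sum_distrib_left mult.assoc)
  have val: "mi {..<Suc N} UNIV (\<lambda>v y. \<Sum>x\<in>UNIV. pV v * pXV v x * W x y)
           - mi {..<Suc N} UNIV (\<lambda>v z. \<Sum>x\<in>UNIV. pV v * pXV v x * Wz x z)
           = fgap W Wz Ps - lam * fgap W Wz Q"
    unfolding e mix_IXY[OF finite_lessThan pVn pXV' W] mix_IXY[OF finite_lessThan pVn pXV' Wz]
      mix sumI[OF W] sumI[OF Wz] by (simp add: fgap_def algebra_simps)
  have "fgap W Wz Ps - lam * fgap W Wz Q > fgap W Wz Ps"
    using lampos Qneg by (simp add: mult_pos_neg)
  then show ?thesis using pVp pXVp val G by (intro exI[of _ "Suc N"] exI[of _ pV] exI[of _ pXV]) simp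
qed



lemma fam_dep:
  fixes Pt :: "'i \<Rightarrow> 'x::finite \<Rightarrow> real"
  assumes I: "finite I" and cI: "card I > CARD('x)"
  shows "\<exists>c. (\<exists>i\<in>I. c i \<noteq> 0) \<and> (\<forall>x. (\<Sum>i\<in>I. c i * Pt i x) = 0)"
proof (cases "inj_on (\<lambda>i. (\<chi> x. Pt i x) :: real^'x) I")
  case False
  then obtain i k where ik: "i \<in> I" "k \<in> I" "i \<noteq> k" and eq: "((\<chi> x. Pt i x) :: real^'x) = (\<chi> x. Pt k x)"
    unfolding inj_on_def by blast
  have Pik: "Pt i = Pt k" using eq by (simp add: vec_lambda_inject fun_eq_iff)
  define c where "c = (\<lambda>j. (if j = i then 1 else 0) - (if j = k then 1 else (0::real)))"
  have "(\<Sum>j\<in>I. c j * Pt j x) = 0" for x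
    unfolding c_def left_diff_distrib sum_subtractf using ik I Pik by (simp add: ite1)
  moreover have "c i \<noteq> 0" using ik by (simp add: c_def)
  ultimately show ?thesis using ik by blast
next
  case True
  define V where "V = (\<lambda>i. (\<chi> x. Pt i x) :: real^'x)"
  have inj: "inj_on V I" using True by (simp add: V_def)
  have fS: "finite (V ` I)" using I by simp
  have "card (V ` I) > DIM(real^'x)" using cI card_image[OF inj] by simp
  then have "dependent (V ` I)" using dependent_biggerset by blast
  then obtain u where u0: "\<exists>v\<in>V ` I. u v \<noteq> 0" and us: "(\<Sum>v\<in>V ` I. u v *\<^sub>R v) = 0"
    using dependent_finite[OF fS] by auto
  define c where "c = (\<lambda>i. u (V i))"
  have "(\<Sum>i\<in>I. c i *\<^sub>R V i) = 0" using us sum.reindex[OF inj, of "\<lambda>v. u v *\<^sub>R v"] by (simp add: c_def o_def)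
  then have "(\<Sum>i\<in>I. c i *\<^sub>R V i) $ x = 0" for x by simp
  then have "(\<Sum>i\<in>I. c i * Pt i x) = 0" for x by (simp add: V_def)
  moreover have "\<exists>i\<in>I. c i \<noteq> 0" using u0 by (auto simp: c_def)
  ultimately show ?thesis by blast
qed

lemma reduce:
  fixes Pt :: "'i \<Rightarrow> 'x::finite \<Rightarrow> real" and Fv :: "'i \<Rightarrow> real"
  assumes "finite I" "\<forall>i\<in>I. w i \<ge> 0" "\<forall>i\<in>I. sum (Pt i) UNIV = 1"
  shows "\<exists>J w'. J \<subseteq> I \<and> card J \<le> CARD('x) \<and> (\<forall>i\<in>J. w' i \<ge> 0) \<and> mixP J w' Pt = mixP I w Pt
           \<and> (\<Sum>i\<in>I. w i * Fv i) \<le> (\<Sum>i\<in>J. w' i * Fv i)"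
  using assms
proof (induction "card I" arbitrary: I w rule: less_induct)
  case less
  note I = less.prems(1) and w = less.prems(2) and Pt = less.prems(3)
  show ?case
  proof (cases "card I \<le> CARD('x)")
    case True then show ?thesis using w by blast
  next
    case False
    obtain c where c0: "\<exists>i\<in>I. c i \<noteq> 0" and cP: "\<forall>x. (\<Sum>i\<in>I. c i * Pt i x) = 0"
      using fam_dep[OF I, of Pt] False by auto
    have cS: "(\<Sum>i\<in>I. c i) = 0"
    proof -
      have "(\<Sum>i\<in>I. c i) = (\<Sum>i\<in>I. c i * (\<Sum>x\<in>UNIV. Pt i x))" using Pt by simp
      also have "\<dots> = (\<Sum>x\<in>UNIV. \<Sum>i\<in>I. c i * Pt i x)"
        by (simp add: sum_distrib_left) (rule sum.swap)
      also have "\<dots> = 0" using cP by simp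
      finally show ?thesis .
    qed
    define d where "d = (if (\<Sum>i\<in>I. c i * Fv i) \<ge> 0 then c else (\<lambda>i. - c i))"
    have dP: "\<forall>x. (\<Sum>i\<in>I. d i * Pt i x) = 0" using cP by (simp add: d_def sum_negf)
    have dS: "(\<Sum>i\<in>I. d i) = 0" using cS by (simp add: d_def sum_negf)
    have dF: "(\<Sum>i\<in>I. d i * Fv i) \<ge> 0" by (simp add: d_def sum_negf)
    have d0: "\<exists>i\<in>I. d i \<noteq> 0" using c0 by (auto simp: d_def)
    have "\<exists>j\<in>I. d j < 0"
    proof (rule ccontr)
      assume "\<not> (\<exists>j\<in>I. d j < 0)"
      then have "\<forall>i\<in>I. d i \<ge> 0" by (auto simp: not_less)
      then have "\<forall>i\<in>I. d i = 0" using sum_nonneg_eq_0_iff[OF I] dS by blast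
      then show False using d0 by blast
    qed
    define N where "N = {i\<in>I. d i < 0}"
    have fN: "finite N" using I by (simp add: N_def)
    have neN: "N \<noteq> {}" using \<open>\<exists>j\<in>I. d j < 0\<close> by (auto simp: N_def)
    define t where "t = Min ((\<lambda>i. w i / (- d i)) ` N)"
    have "t \<in> (\<lambda>i. w i / (- d i)) ` N" unfolding t_def by (rule Min_in) (use fN neN in auto)
    then obtain j where jN: "j \<in> N" and tj: "t = w j / (- d j)" by blast
    have jI: "j \<in> I" and dj: "d j < 0" using jN by (auto simp: N_def)
    have t0: "t \<ge> 0" using tj dj w jI by (simp add: divide_nonneg_neg)
    have tle: "t \<le> w i / (- d i)" if "i \<in> N" for i
      unfolding t_def using fN that by (intro Min_le) auto
    define w2 where "w2 = (\<lambda>i. w i + t * d i)"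
    have w2n: "\<forall>i\<in>I. w2 i \<ge> 0"
    proof
      fix i assume i: "i \<in> I"
      show "w2 i \<ge> 0"
      proof (cases "d i < 0")
        case True
        then have "t \<le> w i / (- d i)" using tle i by (simp add: N_def)
        then have "t * (- d i) \<le> (w i / (- d i)) * (- d i)" using True by (intro mult_right_mono) auto
        also have "\<dots> = w i" using True by simp
        finally have "t * (- d i) \<le> w i" .
        then show ?thesis by (simp add: w2_def)
      next
        case False then show ?thesis using w i t0 by (simp add: w2_def)
      qed
    qed
    have w2j: "w2 j = 0" using tj dj by (simp add: w2_def)
    have mix2: "mixP I w2 Pt = mixP I w Pt"
      unfolding mixP_def w2_def using dP
      by (simp add: distrib_right sum.distrib mult.assoc sum_distrib_left[symmetric])
    have F2: "(\<Sum>i\<in>I. w i * Fv i) \<le> (\<Sum>i\<in>I. w2 i * Fv i)"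
    proof -
      have "(\<Sum>i\<in>I. w2 i * Fv i) = (\<Sum>i\<in>I. w i * Fv i) + t * (\<Sum>i\<in>I. d i * Fv i)"
        unfolding w2_def by (simp add: distrib_right sum.distrib mult.assoc sum_distrib_left)
      then show ?thesis using t0 dF by simp
    qed
    define I' where "I' = I - {j}"
    have I'I: "I' \<subseteq> I" and fI': "finite I'" using I by (auto simp: I'_def)
    have cI': "card I' < card I" using I jI unfolding I'_def by (rule card_Diff1_less)
    have mixI': "mixP I' w2 Pt = mixP I w2 Pt"
      unfolding mixP_def I'_def using I jI w2j by (intro ext) (simp add: sum.remove)
    have FI': "(\<Sum>i\<in>I'. w2 i * Fv i) = (\<Sum>i\<in>I. w2 i * Fv i)"
      unfolding I'_def using I jI w2j by (simp add: sum.remove)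
    have w2n': "\<forall>i\<in>I'. w2 i \<ge> 0" using w2n I'I by blast
    have Pt': "\<forall>i\<in>I'. sum (Pt i) UNIV = 1" using Pt I'I by blast
    have "\<exists>J w'. J \<subseteq> I' \<and> card J \<le> CARD('x) \<and> (\<forall>i\<in>J. w' i \<ge> 0) \<and> mixP J w' Pt = mixP I' w2 Pt
           \<and> (\<Sum>i\<in>I'. w2 i * Fv i) \<le> (\<Sum>i\<in>J. w' i * Fv i)"
      by (rule less.hyps[OF cI' fI' w2n' Pt'])
    then obtain J w' where J: "J \<subseteq> I'" "card J \<le> CARD('x)" "\<forall>i\<in>J. w' i \<ge> 0"
      "mixP J w' Pt = mixP I' w2 Pt" "(\<Sum>i\<in>I'. w2 i * Fv i) \<le> (\<Sum>i\<in>J. w' i * Fv i)"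
      by blast
    have "J \<subseteq> I" using J(1) I'I by blast
    moreover have "mixP J w' Pt = mixP I w Pt" using J(4) mixI' mix2 by simp
    moreover have "(\<Sum>i\<in>I. w i * Fv i) \<le> (\<Sum>i\<in>J. w' i * Fv i)" using J(5) FI' F2 by linarith
    ultimately show ?thesis using J(2,3) by blast
  qed
qed



lemma xlnx_lim: "((\<lambda>x::real. x * ln x) \<longlongrightarrow> 0) (at_right 0)"
  by real_asymp

lemma isCont_phi: "isCont phi t"
proof -
  consider "t < 0" | "t > 0" | "t = 0" by linarith
  then show ?thesis
  proof cases
    case 1
    have ev: "eventually (\<lambda>y. phi y = (\<lambda>_. 0) y) (nhds t)"
      using eventually_nhds_in_open[of "{..<0}" t] 1
      by (auto elim!: eventually_mono simp: phi_def)
    show ?thesis unfolding isCont_cong[OF ev] by simp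
  next
    case 2
    have ev: "eventually (\<lambda>y. phi y = y * log 2 y) (nhds t)"
      using eventually_nhds_in_open[of "{0<..}" t] 2
      by (auto elim!: eventually_mono simp: phi_def)
    show ?thesis unfolding isCont_cong[OF ev] using 2 by (auto intro!: continuous_intros)
  next
    case 3
    have l: "(phi \<longlongrightarrow> 0) (at_left 0)"
    proof -
      have "eventually (\<lambda>y. phi y = 0) (at_left (0::real))"
        unfolding eventually_at_left[of "-1::real" 0, OF neg_less_0_iff_less[THEN iffD2, OF zero_less_one]]
      proof (intro exI[of _ "-1::real"] conjI allI impI)
        fix y :: real assume "y < 0" then show "phi y = 0" by (simp add: phi_def)
      qed simp
      then have "(phi \<longlongrightarrow> 0) (at_left 0) \<longleftrightarrow> ((\<lambda>_. 0) \<longlongrightarrow> (0::real)) (at_left (0::real))"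
        by (rule tendsto_cong)
      then show ?thesis by simp
    qed
    have r: "(phi \<longlongrightarrow> 0) (at_right 0)"
    proof -
      have "eventually (\<lambda>y. phi y = (y * ln y) / ln 2) (at_right (0::real))"
        using eventually_at_right_less[of "0::real"]
        by (auto elim!: eventually_mono simp: phi_def log_def)
      moreover have "((\<lambda>y. (y * ln y) / ln 2) \<longlongrightarrow> 0 / ln 2) (at_right (0::real))"
        by (intro tendsto_divide xlnx_lim tendsto_const) simp
      ultimately show ?thesis using tendsto_cong[of phi "\<lambda>y. (y * ln y) / ln 2" "at_right 0" 0] by simp
    qed
    have "(phi \<longlongrightarrow> 0) (at 0)" using filterlim_split_at[OF l r] .
    then show ?thesis using 3 by (simp add: isCont_def phi_def)
  qed
qed

lemma continuous_on_phi [continuous_intros]: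
  "continuous_on S f \<Longrightarrow> continuous_on S (\<lambda>x. phi (f x))"
  by (rule continuous_on_compose2[of UNIV phi]) (auto intro: continuous_at_imp_continuous_on isCont_phi)



definition IXYc :: "('x::finite \<Rightarrow> 'y::finite \<Rightarrow> real) \<Rightarrow> ('x \<Rightarrow> real) \<Rightarrow> real" where
  "IXYc V P = (\<Sum>x\<in>UNIV. P x * (\<Sum>y\<in>UNIV. phi (V x y))) - (\<Sum>y\<in>UNIV. phi (\<Sum>x\<in>UNIV. P x * V x y))"

lemma IXY_IXYc: "\<forall>x. P x \<ge> 0 \<Longrightarrow> channel V \<Longrightarrow> IXY P V = IXYc V P"
  unfolding IXYc_def by (rule IXY_formula)

lemma Gv_reindex:
  assumes g: "bij_betw g B A"
  shows "Gv mu W Wz B (\<lambda>k. w (g k)) (\<lambda>k. Pt (g k)) = Gv mu W Wz A w Pt"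
proof -
  have "mixP B (\<lambda>k. w (g k)) (\<lambda>k. Pt (g k)) = mixP A w Pt"
    unfolding mixP_def using sum.reindex_bij_betw[OF g] by (intro ext) (rule sum.reindex_bij_betw[OF g])
  moreover have "(\<Sum>k\<in>B. w (g k) * fgap W Wz (Pt (g k))) = (\<Sum>i\<in>A. w i * fgap W Wz (Pt i))"
    by (rule sum.reindex_bij_betw[OF g])
  ultimately show ?thesis unfolding Gv_def by simp
qed

lemma Gv_pad:
  fixes m N :: nat
  assumes mN: "m \<le> N"
  shows "Gv mu W Wz {..<N} (\<lambda>k. if k < m then pU k else 0) (\<lambda>k. if k < m then pXU k else Q)
       = Gv mu W Wz {..<m} pU pXU"
proof -
  have s: "(\<Sum>k\<in>{..<N}. if k < m then f k else 0) = (\<Sum>k\<in>{..<m}. f k)" for f :: "nat \<Rightarrow> real"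
  proof -
    have "(\<Sum>k\<in>{..<N}. if k < m then f k else 0) = sum f ({..<N} \<inter> {k. k < m})"
      by (simp add: sum.inter_restrict)
    also have "{..<N} \<inter> {k. k < m} = {..<m}" using mN by auto
    finally show ?thesis .
  qed
  have "mixP {..<N} (\<lambda>k. if k < m then pU k else 0) (\<lambda>k. if k < m then pXU k else Q) = mixP {..<m} pU pXU"
    unfolding mixP_def using s by (intro ext) (simp add: if_distrib[of "\<lambda>t. t * _"] cong: if_cong)
  moreover have "(\<Sum>k\<in>{..<N}. (if k < m then pU k else 0) * fgap W Wz (if k < m then pXU k else Q))
      = (\<Sum>k\<in>{..<m}. pU k * fgap W Wz (pXU k))"
    using s by (simp add: if_distrib[of "\<lambda>t. t * _"] cong: if_cong)
  ultimately show ?thesis unfolding Gv_def by simp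
qed

definition D1 :: "(real^'k::finite) set" where
  "D1 = {a. (\<forall>k. a $ k \<ge> 0) \<and> (\<Sum>k\<in>UNIV. a $ k) = 1}"

definition D2 :: "(real^('k::finite \<times> 'l::finite)) set" where
  "D2 = {b. (\<forall>k. b $ k \<ge> 0) \<and> (\<forall>u. (\<Sum>x\<in>UNIV. b $ (u, x)) = 1)}"

lemma compact_D1: "compact (D1 :: (real^'k::finite) set)"
proof -
  have cl: "closed (D1 :: (real^'k::finite) set)" unfolding D1_def
    by (intro closed_Collect_conj closed_Collect_all closed_Collect_le closed_Collect_eq continuous_intros)
  have "D1 \<subseteq> cbox 0 (1 :: real^'k)"
  proof
    fix a :: "real^'k" assume a: "a \<in> D1"
    have "a $ k \<le> 1" for k
    proof -
      have "a $ k \<le> (\<Sum>k\<in>UNIV. a $ k)" using a by (intro member_le_sum) (auto simp: D1_def)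
      then show ?thesis using a by (simp add: D1_def)
    qed
    then show "a \<in> cbox 0 1" using a by (simp add: mem_box_cart D1_def)
  qed
  then have "bounded (D1 :: (real^'k) set)" using bounded_subset bounded_cbox by blast
  then show ?thesis using cl compact_eq_bounded_closed by blast
qed

lemma compact_D2: "compact (D2 :: (real^('k::finite \<times> 'l::finite)) set)"
proof -
  have cl: "closed (D2 :: (real^('k::finite \<times> 'l::finite)) set)" unfolding D2_def
    by (intro closed_Collect_conj closed_Collect_all closed_Collect_le closed_Collect_eq continuous_intros)
  have "D2 \<subseteq> cbox 0 (1 :: real^('k \<times> 'l))"
  proof
    fix b :: "real^('k \<times> 'l)" assume b: "b \<in> D2"
    have "b $ k \<le> 1" for k
    proof -
      obtain u x where k: "k = (u, x)" by (cases k)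
      have "b $ (u, x) \<le> (\<Sum>x\<in>UNIV. b $ (u, x))" using b by (intro member_le_sum) (auto simp: D2_def)
      then show ?thesis using b k by (simp add: D2_def)
    qed
    then show "b \<in> cbox 0 1" using b by (simp add: mem_box_cart D2_def)
  qed
  then have "bounded (D2 :: (real^('k \<times> 'l)) set)" using bounded_subset bounded_cbox by blast
  then show ?thesis using cl compact_eq_bounded_closed by blast
qed

definition Phic :: "real \<Rightarrow> ('x::finite \<Rightarrow> 'y::finite \<Rightarrow> real) \<Rightarrow> ('x \<Rightarrow> 'z::finite \<Rightarrow> real)
    \<Rightarrow> (real^'x) \<times> (real^('x \<times> 'x)) \<Rightarrow> real" where
  "Phic mu W Wz p = mu * IXYc W (\<lambda>x. \<Sum>u\<in>UNIV. fst p $ u * snd p $ (u, x))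
      + (\<Sum>u\<in>UNIV. fst p $ u * (IXYc W (\<lambda>x. snd p $ (u, x)) - IXYc Wz (\<lambda>x. snd p $ (u, x))))"

lemma cont_Phic: "continuous_on UNIV (Phic mu W Wz)"
  unfolding Phic_def IXYc_def by (intro continuous_intros)

lemma Phic_Gv:
  assumes p: "p \<in> D1 \<times> D2" and W: "channel W" and Wz: "channel Wz"
  shows "Phic mu W Wz p = Gv mu W Wz UNIV (\<lambda>u. fst p $ u) (\<lambda>u x. snd p $ (u, x))"
proof -
  have a: "\<forall>u. fst p $ u \<ge> 0" and b: "\<forall>u x. snd p $ (u, x) \<ge> 0"
    using p by (auto simp: D1_def D2_def)
  have m: "\<forall>x. mixP UNIV (\<lambda>u. fst p $ u) (\<lambda>u x. snd p $ (u, x)) x \<ge> 0"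
    unfolding mixP_def using a b by (auto intro!: sum_nonneg)
  show ?thesis unfolding Phic_def Gv_def fgap_def
    using IXY_IXYc[OF m W] IXY_IXYc[OF _ W] IXY_IXYc[OF _ Wz] b
    by (simp add: mixP_def)
qed

lemma max_VX:
  fixes W :: "'x::finite \<Rightarrow> 'y::finite \<Rightarrow> real" and Wz :: "'x \<Rightarrow> 'z::finite \<Rightarrow> real"
  assumes W: "channel W" and Wz: "channel Wz"
  shows "\<exists>M\<in>VX_values W Wz mu. \<forall>t\<in>VX_values W Wz mu. t \<le> M"
proof -
  define N where "N = card (UNIV :: 'x set)"
  obtain g where g: "bij_betw g {..<N} (UNIV :: 'x set)"
    using ex_bij_betw_nat_finite[of "UNIV :: 'x set"] unfolding N_def lessThan_atLeast0 by auto
  define h where "h = inv_into {..<N} g"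
  have h: "bij_betw h (UNIV :: 'x set) {..<N}" unfolding h_def by (rule bij_betw_inv_into[OF g])
  have gh: "g (h x) = x" for x unfolding h_def using g by (simp add: bij_betw_inv_into_right)
  define Dm where "Dm = (D1 \<times> D2 :: ((real^'x) \<times> (real^('x \<times> 'x))) set)"
  obtain x0 :: 'x where True by simp
  define p0 where "p0 = ((\<chi> u. if u = x0 then 1 else 0) :: real^'x,
                        (\<chi> k. if snd k = x0 then 1 else 0) :: real^('x \<times> 'x))"
  have "p0 \<in> Dm" unfolding Dm_def D1_def D2_def p0_def by simp
  then have ne: "Dm \<noteq> {}" by blast
  have cD: "compact Dm" unfolding Dm_def by (intro compact_Times compact_D1 compact_D2)
  obtain pm where pm: "pm \<in> Dm" and pmax: "\<forall>p\<in>Dm. Phic mu W Wz p \<le> Phic mu W Wz pm"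
    using continuous_attains_sup[OF cD ne continuous_on_subset[OF cont_Phic subset_UNIV]] by blast
  define M where "M = Phic mu W Wz pm"
  define aM where "aM = (\<lambda>k. fst pm $ g k)"
  define BM where "BM = (\<lambda>k x. snd pm $ (g k, x))"
  have pmD: "pm \<in> D1 \<times> D2" using pm by (simp add: Dm_def)
  have aMp: "is_pmf {..<N} aM"
    using pmD sum.reindex_bij_betw[OF g, of "\<lambda>u. fst pm $ u"] by (auto simp: is_pmf_def aM_def D1_def)
  have BMp: "\<forall>u<N. is_pmf UNIV (BM u)" using pmD by (auto simp: is_pmf_def BM_def D2_def)
  have "M = Gv mu W Wz UNIV (\<lambda>u. fst pm $ u) (\<lambda>u x. snd pm $ (u, x))"
    unfolding M_def using Phic_Gv[OF pmD W Wz] .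
  also have "\<dots> = Gv mu W Wz {..<N} aM BM"
    unfolding aM_def BM_def using Gv_reindex[OF g, of mu W Wz "\<lambda>u. fst pm $ u" "\<lambda>u x. snd pm $ (u, x)"] by simp
  also have "\<dots> = obj mu W Wz {..<N} (UNIV::'x set) (\<lambda>u v x. aM u * BM u x * (if v = x then 1 else 0))"
    using VX_eq_Gv[OF finite_lessThan aMp _ W Wz] BMp by simp
  finally have MVX: "M \<in> VX_values W Wz mu"
    unfolding VX_values_def using aMp BMp N_def by blast
  have "t \<le> M" if t: "t \<in> VX_values W Wz mu" for t
  proof -
    obtain m pU pXU where mN: "m \<le> N" and pU: "is_pmf {..<m} pU" and pXU: "\<forall>u<m. is_pmf UNIV (pXU u)"
      and teq: "t = obj mu W Wz {..<m} (UNIV::'x set) (\<lambda>u v x. pU u * pXU u x * (if v = x then 1 else 0))"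
      using t unfolding VX_values_def N_def by blast
    have "t = Gv mu W Wz {..<m} pU pXU" using teq VX_eq_Gv[OF finite_lessThan pU _ W Wz] pXU by simp
    define Q where "Q = (\<lambda>x. if x0 = x then 1 else 0 :: real)"
    define pU' where "pU' = (\<lambda>k. if k < m then pU k else 0)"
    define pXU' where "pXU' = (\<lambda>k. if k < m then pXU k else Q)"
    have memD: "((\<chi> u. pU' (h u)), (\<chi> k. pXU' (h (fst k)) (snd k))) \<in> D1 \<times> D2"
    proof -
      have s1: "(\<Sum>u\<in>UNIV. pU' (h u)) = 1"
      proof -
        have "(\<Sum>u\<in>UNIV. pU' (h u)) = (\<Sum>k\<in>{..<N}. pU' k)" by (rule sum.reindex_bij_betw[OF h])
        also have "\<dots> = (\<Sum>k\<in>{..<m}. pU k)"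
        proof -
          have "(\<Sum>k\<in>{..<N}. pU' k) = sum pU ({..<N} \<inter> {k. k < m})"
            by (simp add: sum.inter_restrict pU'_def)
          also have "{..<N} \<inter> {k. k < m} = {..<m}" using mN by auto
          finally show ?thesis .
        qed
        finally show ?thesis using pU by (simp add: is_pmf_def)
      qed
      have n1: "\<forall>u. pU' (h u) \<ge> 0" using pU h by (auto simp: pU'_def is_pmf_def)
      have q: "\<forall>k. is_pmf UNIV (pXU' k)" using pXU by (auto simp: pXU'_def Q_def is_pmf_def)
      show ?thesis using s1 n1 q by (auto simp: D1_def D2_def is_pmf_def)
    qed
    have "t = Gv mu W Wz {..<N} pU' pXU'"
      unfolding pU'_def pXU'_def using Gv_pad[OF mN, of mu W Wz pU pXU Q] \<open>t = Gv mu W Wz {..<m} pU pXU\<close> by simp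
    also have "\<dots> = Gv mu W Wz UNIV (\<lambda>u. pU' (h u)) (\<lambda>u. pXU' (h u))"
      by (rule Gv_reindex[OF h, symmetric])
    also have "\<dots> = Phic mu W Wz ((\<chi> u. pU' (h u)), (\<chi> k. pXU' (h (fst k)) (snd k)))"
      using Phic_Gv[OF memD W Wz] by simp
    also have "\<dots> \<le> M" unfolding M_def
      using pmax memD
      unfolding Dm_def by blast
    finally show ?thesis .
  qed
  then show ?thesis using MVX by blast
qed



lemma sum_mixP:
  assumes "finite I" "\<forall>i\<in>I. sum (Pt i) UNIV = 1"
  shows "sum (mixP I w Pt) (UNIV :: 'x::finite set) = sum w I"
proof -
  have "sum (mixP I w Pt) UNIV = (\<Sum>i\<in>I. w i * (\<Sum>x\<in>UNIV. Pt i x))"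
    unfolding mixP_def by (subst sum.swap) (simp add: sum_distrib_left)
  then show ?thesis using assms by simp
qed

lemma part1:
  fixes W :: "'x::finite \<Rightarrow> 'y::finite \<Rightarrow> real" and Wz :: "'x \<Rightarrow> 'z::finite \<Rightarrow> real"
  assumes W: "channel W" and Wz: "channel Wz" and mc: "more_capable W Wz" and mu: "mu \<ge> 0"
  shows "Phi W Wz mu \<in> VX_values W Wz mu \<and> (\<forall>s\<in>VX_values W Wz mu. s \<le> Phi W Wz mu)"
proof -
  obtain M where MT: "M \<in> VX_values W Wz mu" and Mmax: "\<forall>t\<in>VX_values W Wz mu. t \<le> M"
    using max_VX[OF W Wz] by blast
  define S where "S = {obj mu W Wz {..<m} {..<n} (\<lambda>u v x. pU u * pVU u v * pXV v x) |
      (m::nat) (n::nat) pU pVU pXV.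
      is_pmf {..<m} pU \<and> (\<forall>u<m. is_pmf {..<n} (pVU u)) \<and> (\<forall>v<n. is_pmf UNIV (pXV v))}"
  have PhiS: "Phi W Wz mu = Sup S" unfolding Phi_def S_def ..
  define N where "N = card (UNIV :: 'x set)"
  obtain g where g: "bij_betw g {..<N} (UNIV :: 'x set)"
    using ex_bij_betw_nat_finite[of "UNIV :: 'x set"] unfolding N_def lessThan_atLeast0 by auto
  have S_le: "s \<le> M" if s: "s \<in> S" for s
  proof -
    obtain m n :: nat and pU pVU pXV where pU: "is_pmf {..<m} pU" and pVU0: "\<forall>u<m. is_pmf {..<n} (pVU u)"
      and pXV0: "\<forall>v<n. is_pmf UNIV (pXV v)"
      and seq: "s = obj mu W Wz {..<m} {..<n} (\<lambda>u v x. pU u * pVU u v * pXV v x)"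
      using s unfolding S_def by blast
    have pVU: "\<forall>u\<in>{..<m}. is_pmf {..<n} (pVU u)" using pVU0 by simp
    have pXV: "\<forall>v\<in>{..<n}. is_pmf UNIV (pXV v)" using pXV0 by simp
    define Pu where "Pu = (\<lambda>u. mixP {..<n} (pVU u) pXV)"
    have Pup: "\<forall>u\<in>{..<m}. is_pmf UNIV (Pu u)"
      unfolding Pu_def using pVU pXV by (auto intro!: mixP_pmf)
    have Pus: "\<forall>u\<in>{..<m}. sum (Pu u) UNIV = 1" using Pup by (simp add: is_pmf_def)
    have "s \<le> Gv mu W Wz {..<m} pU Pu"
      unfolding seq Pu_def using S_le_Gv[OF finite_lessThan finite_lessThan pU pVU pXV W Wz mc mu] .
    have pUn: "\<forall>i\<in>{..<m}. pU i \<ge> 0" using pU by (simp add: is_pmf_def)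
    obtain J w' where J: "J \<subseteq> {..<m}" "card J \<le> CARD('x)" "\<forall>i\<in>J. w' i \<ge> 0"
      "mixP J w' Pu = mixP {..<m} pU Pu"
      "(\<Sum>i\<in>{..<m}. pU i * fgap W Wz (Pu i)) \<le> (\<Sum>i\<in>J. w' i * fgap W Wz (Pu i))"
      using reduce[OF finite_lessThan pUn Pus, of "\<lambda>i. fgap W Wz (Pu i)"] by blast
    have fJ: "finite J" using J(1) finite_subset by blast
    have "Gv mu W Wz {..<m} pU Pu \<le> Gv mu W Wz J w' Pu"
      unfolding Gv_def J(4) using J(5) by simp
    obtain g' where g': "bij_betw g' {..<card J} J"
      using ex_bij_betw_nat_finite[OF fJ] unfolding lessThan_atLeast0 by auto
    have sw: "sum w' J = 1"
    proof -
      have "sum w' J = sum (mixP J w' Pu) UNIV" using sum_mixP[OF fJ] Pus J(1) by (metis subsetD)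
      also have "\<dots> = sum pU {..<m}" unfolding J(4) using sum_mixP[OF finite_lessThan Pus] .
      finally show ?thesis using pU by (simp add: is_pmf_def)
    qed
    have w'p: "is_pmf {..<card J} (\<lambda>k. w' (g' k))"
      using sw J(3) sum.reindex_bij_betw[OF g', of w'] bij_betwE[OF g']
      by (auto simp: is_pmf_def)
    have Pu'p: "\<forall>k\<in>{..<card J}. is_pmf UNIV (Pu (g' k))"
      using Pup J(1) bij_betwE[OF g'] by blast
    have "Gv mu W Wz J w' Pu = Gv mu W Wz {..<card J} (\<lambda>k. w' (g' k)) (\<lambda>k. Pu (g' k))"
      by (rule Gv_reindex[OF g', symmetric])
    also have "\<dots> = obj mu W Wz {..<card J} (UNIV::'x set)
        (\<lambda>u v x. w' (g' u) * Pu (g' u) x * (if v = x then 1 else 0))"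
      by (rule VX_eq_Gv[OF finite_lessThan w'p Pu'p W Wz, symmetric])
    also have "\<dots> \<in> VX_values W Wz mu"
      unfolding VX_values_def mem_Collect_eq
      by (intro exI[of _ "card J"] exI[of _ "\<lambda>k. w' (g' k)"] exI[of _ "\<lambda>k. Pu (g' k)"])
        (use J(2) w'p Pu'p in auto)
    finally have "Gv mu W Wz J w' Pu \<in> VX_values W Wz mu" .
    then have "Gv mu W Wz J w' Pu \<le> M" using Mmax by blast
    then show ?thesis using \<open>s \<le> Gv mu W Wz {..<m} pU Pu\<close> \<open>Gv mu W Wz {..<m} pU Pu \<le> Gv mu W Wz J w' Pu\<close>
      by linarith
  qed
  have T_sub: "t \<in> S" if t: "t \<in> VX_values W Wz mu" for t
  proof -
    obtain m :: nat and pU pXU where pU: "is_pmf {..<m} pU" and pXU0: "\<forall>u<m. is_pmf UNIV (pXU u)"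
      and teq: "t = obj mu W Wz {..<m} (UNIV::'x set) (\<lambda>u v x. pU u * pXU u x * (if v = x then 1 else 0))"
      using t unfolding VX_values_def by blast
    have pXU: "\<forall>u\<in>{..<m}. is_pmf UNIV (pXU u)" using pXU0 by simp
    have "t = Gv mu W Wz {..<m} pU pXU" using teq VX_eq_Gv[OF finite_lessThan pU pXU W Wz] by simp
    also have "\<dots> = obj mu W Wz {..<m} {..<N} (\<lambda>u v x. pU u * pXU u (g v) * (if g v = x then 1 else 0))"
      by (rule Gv_in_S[OF finite_lessThan pU pXU W Wz g finite_lessThan, symmetric])
    finally have teq2: "t = obj mu W Wz {..<m} {..<N} (\<lambda>u v x. pU u * (\<lambda>u v. pXU u (g v)) u v * (\<lambda>v x. if g v = x then 1 else 0) v x)"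
      by simp
    have c1: "\<forall>u<m. is_pmf {..<N} (\<lambda>v. pXU u (g v))"
    proof (intro allI impI)
      fix u assume "u < m"
      then show "is_pmf {..<N} (\<lambda>v. pXU u (g v))"
        using pXU0 sum.reindex_bij_betw[OF g, of "pXU u"] by (simp add: is_pmf_def)
    qed
    have c2: "\<forall>v<N. is_pmf UNIV (\<lambda>x. if g v = x then 1 else (0::real))" by (simp add: delta_pmf)
    show ?thesis unfolding S_def mem_Collect_eq
      by (intro exI[of _ m] exI[of _ N] exI[of _ pU] exI[of _ "\<lambda>u v. pXU u (g v)"]
            exI[of _ "\<lambda>v x. if g v = x then 1 else (0::real)"]) (use teq2 pU c1 c2 in auto)
  qed
  have "Sup S = M" using T_sub[OF MT] S_le by (intro cSup_eq_maximum)
  then show ?thesis using PhiS MT Mmax by simp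
qed


theorem theorem2:
  fixes W :: "'x::finite \<Rightarrow> 'y::finite \<Rightarrow> real" and Wz :: "'x \<Rightarrow> 'z::finite \<Rightarrow> real"
  assumes "channel W" and "channel Wz"
  shows "(more_capable W Wz \<longrightarrow>
            (\<forall>mu::real. mu \<ge> 0 \<longrightarrow>
               Phi W Wz mu \<in> VX_values W Wz mu \<and> (\<forall>s\<in>VX_values W Wz mu. s \<le> Phi W Wz mu)))
       \<and> ((\<not> more_capable W Wz \<and>
            (\<exists>Ps. is_pmf UNIV Ps \<and> (\<forall>x. Ps x > 0) \<and>
                  (\<forall>P. is_pmf UNIV P \<longrightarrow> IXY P W - IXY P Wz \<le> IXY Ps W - IXY Ps Wz)))
          \<longrightarrow> (\<exists>(n::nat) pV pXV. is_pmf {..<n} pV \<and> (\<forall>v<n. is_pmf UNIV (pXV v)) \<and>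
                 mi {..<n} UNIV (\<lambda>v y. \<Sum>x\<in>UNIV. pV v * pXV v x * W x y)
                 - mi {..<n} UNIV (\<lambda>v z. \<Sum>x\<in>UNIV. pV v * pXV v x * Wz x z)
                 > (GREATEST f. \<exists>P. is_pmf UNIV P \<and> f = IXY P W - IXY P Wz)))"
  apply (rule conjI)
  using part1[OF assms] apply blast
  using part2[OF assms] apply blast
  done

end
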